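(* Let $\mathcal W,\mathcal U,\mathcal V$ be finite, $\Phi_W$ a pmf, $\Phi_{U|W}$ a codebook distribution and $\Phi_{V|W,U}$ a memoryless channel. Let $\mathcal B^{(n)}=\{u^n(w^n,j): w^n\in\mathcal W^n, j\in[2^{nR}]\}$ have independent entries, $u^n(w^n,j)\sim\prod_{t=1}^n\Phi_{U|W}(\cdot|w_t)$. Let $W^n\sim\prod\Phi_W$ and $J$ uniform on $[2^{nR}]$ independent of $W^n$; set $U^n=u^n(W^n,J)$ and pass $(W^n,U^n)$ through $\prod\Phi_{V|W,U}$ to obtain $V^n$ with distribution $P_{V^n}$; let $Q_{V^n}=\prod\Phi_V$, where $\Phi_V=\sum_{w,u}\Phi_W\Phi_{U|W}\Phi_{V|W,U}$. If $R>I_\Phi(W,U;V)-H_\Phi(W)$, then $\lim_{n\to\infty}\mathbf E\|P_{V^n}-Q_{V^n}\|_{TV}=0$, and the convergence is exponentially fast in $n$.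
   Context: Expectation over the random codebook; information quantities in bits under $\Phi_W\Phi_{U|W}\Phi_{V|W,U}$. Total variation is half the $\ell_1$ distance. *)

theory Defs
  imports Complex_Main "HOL-Library.FuncSet"
begin

text \<open>Sequences of length n over an alphabet are represented as lists of length n;
  position t (0-based) of a list xs is xs ! t.\<close>

definition seqs :: "nat \<Rightarrow> 'a list set" where
  "seqs n = {xs. length xs = n}"

definition xlog2 :: "real \<Rightarrow> real \<Rightarrow> real" where
  "xlog2 x y = (if x = 0 then 0 else x * log 2 y)"

definition entropy_bits :: "('w::finite \<Rightarrow> real) \<Rightarrow> real" where
  "entropy_bits PW = - (\<Sum>w\<in>UNIV. xlog2 (PW w) (PW w))"

definition out_marg :: "('w::finite \<Rightarrow> real) \<Rightarrow> ('w \<Rightarrow> 'u::finite \<Rightarrow> real)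
    \<Rightarrow> ('w \<Rightarrow> 'u \<Rightarrow> 'v \<Rightarrow> real) \<Rightarrow> 'v \<Rightarrow> real" where
  "out_marg PW PUW PV v = (\<Sum>w\<in>UNIV. \<Sum>u\<in>UNIV. PW w * PUW w u * PV w u v)"

definition mutual_info_WU_V :: "('w::finite \<Rightarrow> real) \<Rightarrow> ('w \<Rightarrow> 'u::finite \<Rightarrow> real)
    \<Rightarrow> ('w \<Rightarrow> 'u \<Rightarrow> 'v::finite \<Rightarrow> real) \<Rightarrow> real" where
  "mutual_info_WU_V PW PUW PV =
     (\<Sum>w\<in>UNIV. \<Sum>u\<in>UNIV. \<Sum>v\<in>UNIV.
        xlog2 (PW w * PUW w u * PV w u v)
              ((PW w * PUW w u * PV w u v) / ((PW w * PUW w u) * out_marg PW PUW PV v)))"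

text \<open>Number of codewords per w^n: [2^{nR}] = {1, ..., ceiling(2^{nR})}.\<close>
definition num_cw :: "real \<Rightarrow> nat \<Rightarrow> nat" where
  "num_cw R n = nat \<lceil>2 powr (real n * R)\<rceil>"

definition codebooks :: "nat \<Rightarrow> nat \<Rightarrow> ('w list \<times> nat \<Rightarrow> 'u list) set" where
  "codebooks n M = PiE (seqs n \<times> {1..M}) (\<lambda>_. seqs n)"

definition codebook_prob :: "('w \<Rightarrow> 'u \<Rightarrow> real) \<Rightarrow> nat \<Rightarrow> nat
    \<Rightarrow> ('w list \<times> nat \<Rightarrow> 'u list) \<Rightarrow> real" where
  "codebook_prob PUW n M c =
     (\<Prod>(ws, j)\<in>seqs n \<times> {1..M}. \<Prod>t<n. PUW (ws ! t) (c (ws, j) ! t))"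

definition induced_out :: "('w \<Rightarrow> real) \<Rightarrow> ('w \<Rightarrow> 'u \<Rightarrow> 'v \<Rightarrow> real) \<Rightarrow> nat \<Rightarrow> nat
    \<Rightarrow> ('w list \<times> nat \<Rightarrow> 'u list) \<Rightarrow> 'v list \<Rightarrow> real" where
  "induced_out PW PV n M c vs =
     (\<Sum>ws\<in>seqs n. (\<Prod>t<n. PW (ws ! t)) *
        ((1 / real M) * (\<Sum>j\<in>{1..M}. \<Prod>t<n. PV (ws ! t) (c (ws, j) ! t) (vs ! t))))"

definition tv_dist :: "nat \<Rightarrow> ('v list \<Rightarrow> real) \<Rightarrow> ('v list \<Rightarrow> real) \<Rightarrow> real" where
  "tv_dist n P Q = (1/2) * (\<Sum>vs\<in>seqs n. \<bar>P vs - Q vs\<bar>)"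

definition expected_tv :: "('w::finite \<Rightarrow> real) \<Rightarrow> ('w \<Rightarrow> 'u::finite \<Rightarrow> real)
    \<Rightarrow> ('w \<Rightarrow> 'u \<Rightarrow> 'v::finite \<Rightarrow> real) \<Rightarrow> real \<Rightarrow> nat \<Rightarrow> real" where
  "expected_tv PW PUW PV R n =
     (let M = num_cw R n in
      \<Sum>c\<in>codebooks n M. codebook_prob PUW n M c *
         tv_dist n (induced_out PW PV n M c)
                   (\<lambda>vs. \<Prod>t<n. out_marg PW PUW PV (vs ! t)))"

end

theory Submission
  imports Defs
begin


lemma finite_seqs[simp]: "finite (seqs n :: ('a::finite) list set)"
  unfolding seqs_def using finite_lists_length_eq[of "UNIV::'a set" n] by simp

lemma seqs_Suc: "seqs (Suc n) = (\<lambda>(x,xs). x # xs) ` (UNIV \<times> seqs n)"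
  unfolding seqs_def by (auto simp: length_Suc_conv)

lemma sum_seqs_prod:
  fixes f :: "nat \<Rightarrow> 'a::finite \<Rightarrow> 'b::comm_semiring_1"
  shows "(\<Sum>xs\<in>seqs n. \<Prod>t<n. f t (xs!t)) = (\<Prod>t<n. \<Sum>x\<in>UNIV. f t x)"
proof (induction n arbitrary: f)
  case 0
  then show ?case by (simp add: seqs_def)
next
  case (Suc n)
  have inj: "inj_on (\<lambda>(x,xs). x # xs) (UNIV \<times> seqs n)" by (auto simp: inj_on_def)
  have "(\<Sum>xs\<in>seqs (Suc n). \<Prod>t<Suc n. f t (xs!t))
      = (\<Sum>(x,xs)\<in>UNIV \<times> seqs n. \<Prod>t<Suc n. f t ((x#xs)!t))"
    unfolding seqs_Suc by (subst sum.reindex[OF inj]) (simp add: case_prod_unfold)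
  also have "\<dots> = (\<Sum>(x,xs)\<in>UNIV \<times> seqs n. f 0 x * (\<Prod>t<n. f (Suc t) (xs!t)))"
    by (simp add: prod.lessThan_Suc_shift del: prod.lessThan_Suc)
  also have "\<dots> = (\<Sum>x\<in>UNIV. f 0 x * (\<Sum>xs\<in>seqs n. \<Prod>t<n. f (Suc t) (xs!t)))"
    by (simp add: sum.cartesian_product[symmetric] sum_distrib_left)
  also have "\<dots> = (\<Sum>x\<in>UNIV. f 0 x) * (\<Prod>t<n. \<Sum>x\<in>UNIV. f (Suc t) x)"
    by (simp add: Suc.IH[of "\<lambda>t. f (Suc t)"] sum_distrib_right)
  also have "\<dots> = (\<Prod>t<Suc n. \<Sum>x\<in>UNIV. f t x)"
    by (simp add: prod.lessThan_Suc_shift del: prod.lessThan_Suc)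
  finally show ?case .
qed




lemma expect_prod:
  fixes q :: "'k \<Rightarrow> 'x \<Rightarrow> real"
  assumes K: "finite K" and S: "finite S"
  shows "(\<Sum>c\<in>PiE K (\<lambda>_. S). \<Prod>k\<in>K. q k (c k) * \<phi> k (c k)) = (\<Prod>k\<in>K. \<Sum>x\<in>S. q k x * \<phi> k x)"
  using prod_sum_PiE[OF K, of "\<lambda>_. S" "\<lambda>k x. q k x * \<phi> k x"] S by simp

lemma expect_one:
  fixes q :: "'k \<Rightarrow> 'x \<Rightarrow> real"
  assumes K: "finite K" and S: "finite S" and qs: "\<And>k. k\<in>K \<Longrightarrow> (\<Sum>x\<in>S. q k x) = 1"
  shows "(\<Sum>c\<in>PiE K (\<lambda>_. S). \<Prod>k\<in>K. q k (c k)) = 1"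
  using expect_prod[OF K S, of q "\<lambda>_ _. 1"] qs by simp

lemma expect1:
  fixes q :: "'k \<Rightarrow> 'x \<Rightarrow> real"
  assumes K: "finite K" and S: "finite S" and qs: "\<And>k. k\<in>K \<Longrightarrow> (\<Sum>x\<in>S. q k x) = 1"
    and k0: "k0 \<in> K"
  shows "(\<Sum>c\<in>PiE K (\<lambda>_. S). (\<Prod>k\<in>K. q k (c k)) * f (c k0)) = (\<Sum>x\<in>S. q k0 x * f x)"
proof -
  let ?\<phi> = "\<lambda>k x. if k = k0 then f x else 1"
  have "(\<Sum>c\<in>PiE K (\<lambda>_. S). (\<Prod>k\<in>K. q k (c k)) * f (c k0))
      = (\<Sum>c\<in>PiE K (\<lambda>_. S). \<Prod>k\<in>K. q k (c k) * ?\<phi> k (c k))"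
    by (rule sum.cong[OF refl]) (simp add: prod.distrib K k0 prod.If_cases)
  also have "\<dots> = (\<Prod>k\<in>K. \<Sum>x\<in>S. q k x * ?\<phi> k x)" by (rule expect_prod[OF K S])
  also have "\<dots> = (\<Prod>k\<in>K. if k = k0 then (\<Sum>x\<in>S. q k0 x * f x) else 1)"
    by (rule prod.cong[OF refl]) (simp add: qs)
  also have "\<dots> = (\<Sum>x\<in>S. q k0 x * f x)" using K k0 by simp
  finally show ?thesis .
qed

lemma expect2:
  fixes q :: "'k \<Rightarrow> 'x \<Rightarrow> real"
  assumes K: "finite K" and S: "finite S" and qs: "\<And>k. k\<in>K \<Longrightarrow> (\<Sum>x\<in>S. q k x) = 1"
    and k0: "k0 \<in> K" and k1: "k1 \<in> K" and ne: "k0 \<noteq> k1"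
  shows "(\<Sum>c\<in>PiE K (\<lambda>_. S). (\<Prod>k\<in>K. q k (c k)) * (f (c k0) * g (c k1)))
     = (\<Sum>x\<in>S. q k0 x * f x) * (\<Sum>x\<in>S. q k1 x * g x)"
proof -
  let ?\<phi> = "\<lambda>k x. (if k = k0 then f x else 1) * (if k = k1 then g x else 1)"
  have "(\<Sum>c\<in>PiE K (\<lambda>_. S). (\<Prod>k\<in>K. q k (c k)) * (f (c k0) * g (c k1)))
      = (\<Sum>c\<in>PiE K (\<lambda>_. S). \<Prod>k\<in>K. q k (c k) * ?\<phi> k (c k))"
    by (rule sum.cong[OF refl]) (simp add: prod.distrib K k0 k1)
  also have "\<dots> = (\<Prod>k\<in>K. \<Sum>x\<in>S. q k x * ?\<phi> k x)" by (rule expect_prod[OF K S])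
  also have "\<dots> = (\<Prod>k\<in>K. (if k = k0 then (\<Sum>x\<in>S. q k0 x * f x) else 1)
                        * (if k = k1 then (\<Sum>x\<in>S. q k1 x * g x) else 1))"
    by (rule prod.cong[OF refl]) (use ne in \<open>simp add: qs\<close>)
  also have "\<dots> = (\<Sum>x\<in>S. q k0 x * f x) * (\<Sum>x\<in>S. q k1 x * g x)"
    using K k0 k1 by (simp add: prod.distrib)
  finally show ?thesis .
qed

lemma weighted_cs:
  fixes p Z :: "'c \<Rightarrow> real"
  assumes C: "finite C" and p0: "\<And>c. p c \<ge> 0" and ps: "(\<Sum>c\<in>C. p c) = 1"
  shows "(\<Sum>c\<in>C. p c * \<bar>Z c\<bar>) \<le> sqrt (\<Sum>c\<in>C. p c * (Z c)^2)"
proof -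
  define m where "m = (\<Sum>c\<in>C. p c * \<bar>Z c\<bar>)"
  have "0 \<le> (\<Sum>c\<in>C. p c * (\<bar>Z c\<bar> - m)^2)" by (intro sum_nonneg) (simp add: p0)
  also have "\<dots> = (\<Sum>c\<in>C. p c * (Z c)^2) - 2 * m * (\<Sum>c\<in>C. p c * \<bar>Z c\<bar>) + m^2 * (\<Sum>c\<in>C. p c)"
    by (simp add: power2_eq_square algebra_simps sum.distrib sum_subtractf sum_distrib_left sum_distrib_right)
  finally have "m^2 \<le> (\<Sum>c\<in>C. p c * (Z c)^2)" using ps by (simp add: m_def power2_eq_square)
  then show ?thesis unfolding m_def[symmetric] by (simp add: real_le_rsqrt)
qed




lemma soft_cover_v:
  fixes q t :: "'k \<Rightarrow> 'x \<Rightarrow> real"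
  assumes K: "finite K" and S: "finite S"
    and q0: "\<And>k x. q k x \<ge> 0" and qs: "\<And>k. k\<in>K \<Longrightarrow> (\<Sum>x\<in>S. q k x) = 1"
    and t0: "\<And>k x. t k x \<ge> 0" and tau: "\<tau> > 0" and s: "s > 0"
    and Qdef: "Qv = (\<Sum>k\<in>K. \<Sum>x\<in>S. q k x * t k x)"
  shows "(\<Sum>c\<in>PiE K (\<lambda>_. S). (\<Prod>k\<in>K. q k (c k)) * \<bar>(\<Sum>k\<in>K. t k (c k)) - Qv\<bar>)
        \<le> sqrt \<tau> * Qv + 2 * (\<Sum>k\<in>K. \<Sum>x\<in>S. q k x * t k x * (t k x / (\<tau> * Qv)) powr s)"
proof -
  define C where "C = PiE K (\<lambda>_. S)"
  define p where "p c = (\<Prod>k\<in>K. q k (c k))" for c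
  have C: "finite C" unfolding C_def using K S by (simp add: finite_PiE)
  have p0: "p c \<ge> 0" for c unfolding p_def by (simp add: prod_nonneg q0)
  have ps: "(\<Sum>c\<in>C. p c) = 1" unfolding C_def p_def by (rule expect_one[OF K S qs])
  define A where "A k x = (if t k x \<le> \<tau> * Qv then t k x else 0)" for k x
  define B where "B k x = t k x - A k x" for k x
  define a where "a k = (\<Sum>x\<in>S. q k x * A k x)" for k
  define b where "b k = (\<Sum>x\<in>S. q k x * B k x)" for k
  define X where "X k x = A k x - a k" for k x
  define Z where "Z c = (\<Sum>k\<in>K. X k (c k))" for c
  have A0: "A k x \<ge> 0" for k x by (simp add: A_def t0)
  have B0: "B k x \<ge> 0" for k x by (simp add: A_def B_def t0)
  have Qv0: "Qv \<ge> 0" unfolding Qdef by (intro sum_nonneg mult_nonneg_nonneg q0 t0)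
  have Qab: "Qv = (\<Sum>k\<in>K. a k) + (\<Sum>k\<in>K. b k)"
    unfolding Qdef a_def b_def B_def by (simp add: algebra_simps sum.distrib[symmetric] sum_subtractf)
  have pt: "\<bar>(\<Sum>k\<in>K. t k (c k)) - Qv\<bar> \<le> \<bar>Z c\<bar> + (\<Sum>k\<in>K. B k (c k)) + (\<Sum>k\<in>K. b k)" for c
  proof -
    have "(\<Sum>k\<in>K. t k (c k)) - Qv = Z c + ((\<Sum>k\<in>K. B k (c k)) - (\<Sum>k\<in>K. b k))"
      unfolding Qab Z_def X_def B_def by (simp add: sum_subtractf)
    moreover have "(\<Sum>k\<in>K. B k (c k)) \<ge> 0" by (simp add: B0 sum_nonneg)
    moreover have "(\<Sum>k\<in>K. b k) \<ge> 0" unfolding b_def by (simp add: B0 q0 sum_nonneg)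
    ultimately show ?thesis by linarith
  qed
  have EB: "(\<Sum>c\<in>C. p c * (\<Sum>k\<in>K. B k (c k))) = (\<Sum>k\<in>K. b k)"
  proof -
    have "(\<Sum>c\<in>C. p c * (\<Sum>k\<in>K. B k (c k))) = (\<Sum>k\<in>K. \<Sum>c\<in>C. p c * B k (c k))"
      by (simp add: sum_distrib_left sum.swap[of _ C])
    also have "\<dots> = (\<Sum>k\<in>K. b k)"
      unfolding C_def p_def b_def by (rule sum.cong[OF refl], rule expect1[OF K S qs])
    finally show ?thesis .
  qed
  have EZ2: "(\<Sum>c\<in>C. p c * (Z c)^2) \<le> \<tau> * Qv * Qv"
  proof -
    have "(\<Sum>c\<in>C. p c * (Z c)^2) = (\<Sum>k\<in>K. \<Sum>l\<in>K. \<Sum>c\<in>C. p c * (X k (c k) * X l (c l)))"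
    proof -
      have "(\<Sum>c\<in>C. p c * (Z c)^2) = (\<Sum>c\<in>C. \<Sum>k\<in>K. \<Sum>l\<in>K. p c * (X k (c k) * X l (c l)))"
        unfolding Z_def power2_eq_square sum_product by (simp add: sum_distrib_left)
      also have "\<dots> = (\<Sum>k\<in>K. \<Sum>c\<in>C. \<Sum>l\<in>K. p c * (X k (c k) * X l (c l)))"
        by (rule sum.swap)
      also have "\<dots> = (\<Sum>k\<in>K. \<Sum>l\<in>K. \<Sum>c\<in>C. p c * (X k (c k) * X l (c l)))"
        by (rule sum.cong[OF refl], rule sum.swap)
      finally show ?thesis .
    qed
    also have "\<dots> = (\<Sum>k\<in>K. \<Sum>x\<in>S. q k x * (X k x * X k x))"
    proof (rule sum.cong[OF refl])
      fix k assume k: "k \<in> K"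
      have zero: "(\<Sum>x\<in>S. q k x * X k x) = 0" if "k \<in> K" for k
        using that unfolding X_def a_def
          by (simp add: right_diff_distrib sum_subtractf sum_distrib_right[symmetric] qs)
      show "(\<Sum>l\<in>K. \<Sum>c\<in>C. p c * (X k (c k) * X l (c l))) = (\<Sum>x\<in>S. q k x * (X k x * X k x))"
      proof -
        have "(\<Sum>l\<in>K. \<Sum>c\<in>C. p c * (X k (c k) * X l (c l)))
            = (\<Sum>l\<in>K. if l = k then (\<Sum>x\<in>S. q k x * (X k x * X k x)) else 0)"
        proof (rule sum.cong[OF refl])
          fix l assume l: "l \<in> K"
          show "(\<Sum>c\<in>C. p c * (X k (c k) * X l (c l))) = (if l = k then (\<Sum>x\<in>S. q k x * (X k x * X k x)) else 0)"
          proof (cases "l = k")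
            case True
            then show ?thesis unfolding C_def p_def
              using expect1[OF K S qs k, where f="\<lambda>x. X k x * X k x"] by simp
          next
            case False
            then show ?thesis unfolding C_def p_def
              using expect2[OF K S qs k l, where f="X k" and g="X l"] zero[OF k] by simp
          qed
        qed
        also have "\<dots> = (\<Sum>x\<in>S. q k x * (X k x * X k x))" using K k by simp
        finally show ?thesis .
      qed
    qed
    also have "\<dots> \<le> (\<Sum>k\<in>K. \<Sum>x\<in>S. q k x * (A k x * A k x))"
    proof (rule sum_mono)
      fix k assume k: "k \<in> K"
      have "(\<Sum>x\<in>S. q k x * (X k x * X k x)) = (\<Sum>x\<in>S. q k x * (A k x * A k x)) - a k * a k"
      proof -
        have "(\<Sum>x\<in>S. q k x * (X k x * X k x)) = (\<Sum>x\<in>S. q k x * (A k x * A k x)) - 2 * a k * (\<Sum>x\<in>S. q k x * A k x) + a k * a k * (\<Sum>x\<in>S. q k x)"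
          unfolding X_def by (simp add: algebra_simps sum.distrib sum_subtractf sum_distrib_left)
        then show ?thesis by (simp add: qs k a_def[symmetric])
      qed
      then show "(\<Sum>x\<in>S. q k x * (X k x * X k x)) \<le> (\<Sum>x\<in>S. q k x * (A k x * A k x))" by simp
    qed
    also have "\<dots> \<le> (\<Sum>k\<in>K. \<Sum>x\<in>S. \<tau> * Qv * (q k x * t k x))"
    proof (intro sum_mono)
      fix k x
      have "A k x \<le> \<tau> * Qv" "A k x \<le> t k x" using tau Qv0 by (auto simp: A_def t0)
      then have "A k x * A k x \<le> \<tau> * Qv * t k x" by (meson A0 mult_mono order_trans tau Qv0 mult_nonneg_nonneg less_imp_le) 
      then show "q k x * (A k x * A k x) \<le> \<tau> * Qv * (q k x * t k x)"
        using mult_left_mono[OF _ q0[of k x], of "A k x * A k x" "\<tau> * Qv * t k x"] by (simp add: algebra_simps)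
    qed
    also have "\<dots> = \<tau> * Qv * Qv" unfolding Qdef by (simp add: sum_distrib_left)
    finally show ?thesis .
  qed
  have EZ: "(\<Sum>c\<in>C. p c * \<bar>Z c\<bar>) \<le> sqrt \<tau> * Qv"
  proof -
    have "(\<Sum>c\<in>C. p c * \<bar>Z c\<bar>) \<le> sqrt (\<Sum>c\<in>C. p c * (Z c)^2)" by (rule weighted_cs[OF C p0 ps])
    also have "\<dots> \<le> sqrt (\<tau> * Qv * Qv)" using EZ2 by simp
    also have "\<dots> = sqrt \<tau> * Qv" using Qv0 tau by (simp add: real_sqrt_mult)
    finally show ?thesis .
  qed
  have bB: "(\<Sum>k\<in>K. b k) \<le> (\<Sum>k\<in>K. \<Sum>x\<in>S. q k x * t k x * (t k x / (\<tau> * Qv)) powr s)"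
    unfolding b_def
  proof (intro sum_mono)
    fix k x assume k: "k \<in> K" and x: "x \<in> S"
    show "q k x * B k x \<le> q k x * t k x * (t k x / (\<tau> * Qv)) powr s"
    proof (cases "q k x * t k x = 0")
      case True
      have "q k x * B k x = 0"
      proof (cases "q k x = 0")
        case False
        with True have "t k x = 0" by simp
        then show ?thesis by (simp add: B_def A_def)
      qed simp
      then show ?thesis using True by (simp only:)
    next
      case False
      have "q k x * t k x \<le> Qv"
      proof -
        have "q k x * t k x \<le> (\<Sum>x\<in>S. q k x * t k x)"
          by (rule member_le_sum[OF x _ S]) (simp add: q0 t0)
        also have "\<dots> \<le> (\<Sum>k\<in>K. \<Sum>x\<in>S. q k x * t k x)"
          by (rule member_le_sum[OF k _ K, where f="\<lambda>k. \<Sum>x\<in>S. q k x * t k x"]) (simp add: q0 t0 sum_nonneg)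
        finally show ?thesis unfolding Qdef .
      qed
      with False have Qpos: "Qv > 0" using q0 t0 by (metis dual_order.order_iff_strict mult_nonneg_nonneg order.strict_trans2)
      show ?thesis
      proof (cases "t k x \<le> \<tau> * Qv")
        case True
        then show ?thesis by (simp add: B_def A_def q0 t0)
      next
        case nle: False
        then have "t k x / (\<tau> * Qv) > 1" using Qpos tau by simp
        then have "(t k x / (\<tau> * Qv)) powr s \<ge> 1" using s by (simp add: ge_one_powr_ge_zero less_imp_le)
        then have "q k x * t k x * 1 \<le> q k x * t k x * (t k x / (\<tau> * Qv)) powr s"
          by (intro mult_left_mono) (simp_all add: q0 t0)
        then show ?thesis using nle by (simp add: B_def A_def)
      qed
    qed
  qed
  have "(\<Sum>c\<in>C. p c * \<bar>(\<Sum>k\<in>K. t k (c k)) - Qv\<bar>)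
      \<le> (\<Sum>c\<in>C. p c * (\<bar>Z c\<bar> + (\<Sum>k\<in>K. B k (c k)) + (\<Sum>k\<in>K. b k)))"
    by (intro sum_mono mult_left_mono pt p0)
  also have "\<dots> = (\<Sum>c\<in>C. p c * \<bar>Z c\<bar>) + (\<Sum>c\<in>C. p c * (\<Sum>k\<in>K. B k (c k))) + (\<Sum>k\<in>K. b k)"
    by (simp add: algebra_simps sum.distrib sum_distrib_right[symmetric] ps)
  also have "\<dots> \<le> sqrt \<tau> * Qv + 2 * (\<Sum>k\<in>K. \<Sum>x\<in>S. q k x * t k x * (t k x / (\<tau> * Qv)) powr s)"
    using EZ EB bB by linarith
  finally show ?thesis unfolding C_def p_def .
qed




definition gfun :: "('w::finite \<Rightarrow> real) \<Rightarrow> ('w \<Rightarrow> 'u::finite \<Rightarrow> real)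
    \<Rightarrow> ('w \<Rightarrow> 'u \<Rightarrow> 'v::finite \<Rightarrow> real) \<Rightarrow> real \<Rightarrow> real" where
  "gfun PW PUW PV s = (\<Sum>w\<in>UNIV. \<Sum>u\<in>UNIV. \<Sum>v\<in>UNIV.
      PW w * PUW w u * PV w u v * (PW w * PV w u v / out_marg PW PUW PV v) powr s)"

lemma num_cw_facts: "real (num_cw R n) \<ge> 2 powr (real n * R) \<and> num_cw R n \<ge> 1"
proof -
  define x where "x = 2 powr (real n * R)"
  have x: "x > 0" unfolding x_def by simp
  have c: "real_of_int \<lceil>x\<rceil> \<ge> x" by (rule le_of_int_ceiling)
  with x have "real_of_int \<lceil>x\<rceil> > 0" by linarith
  then have cp: "\<lceil>x\<rceil> > 0" by simp
  then have "real (nat \<lceil>x\<rceil>) = real_of_int \<lceil>x\<rceil>" by simp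
  moreover have "nat \<lceil>x\<rceil> \<ge> 1" using cp by linarith
  ultimately show ?thesis using c unfolding num_cw_def x_def[symmetric] by simp
qed

lemma num_cw_ge1: "num_cw R n \<ge> 1" using num_cw_facts by blast
lemma num_cw_ge: "real (num_cw R n) \<ge> 2 powr (real n * R)" using num_cw_facts by blast




lemma sum_times_split: "(\<Sum>k\<in>A\<times>B. f k) = (\<Sum>x\<in>A. \<Sum>y\<in>B. f (x,y))"
  by (simp add: sum.cartesian_product)

lemma main_bound:
  fixes PW :: "'w::finite \<Rightarrow> real"
    and PUW :: "'w \<Rightarrow> 'u::finite \<Rightarrow> real"
    and PV :: "'w \<Rightarrow> 'u \<Rightarrow> 'v::finite \<Rightarrow> real"
  assumes PW_nonneg: "\<And>w. PW w \<ge> 0"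
    and PW_sum: "(\<Sum>w\<in>UNIV. PW w) = 1"
    and PUW_nonneg: "\<And>w u. PUW w u \<ge> 0"
    and PUW_sum: "\<And>w. (\<Sum>u\<in>UNIV. PUW w u) = 1"
    and PV_nonneg: "\<And>w u v. PV w u v \<ge> 0"
    and PV_sum: "\<And>w u. (\<Sum>v\<in>UNIV. PV w u v) = 1"
    and tau: "\<tau> > 0" and s: "s > 0"
  shows "expected_tv PW PUW PV R n
     \<le> 1/2 * sqrt \<tau> + (\<tau> * real (num_cw R n)) powr (-s) * (gfun PW PUW PV s)^n"
proof -
  define M where "M = num_cw R n"
  have M1: "M \<ge> 1" unfolding M_def by (rule num_cw_ge1)
  define K where "K = (seqs n :: 'w list set) \<times> {1..M}"
  define S where "S = (seqs n :: 'u list set)"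
  define om where "om = out_marg PW PUW PV"
  define q where "q k u = (\<Prod>t<n. PUW (fst k ! t) (u ! t))" for k :: "'w list \<times> nat" and u
  define tt where "tt vs k u = (\<Prod>t<n. PW (fst k ! t)) * (1 / real M * (\<Prod>t<n. PV (fst k ! t) (u ! t) (vs ! t)))"
    for vs :: "'v list" and k :: "'w list \<times> nat" and u
  define Qf where "Qf vs = (\<Prod>t<n. om (vs ! t))" for vs :: "'v list"
  have K: "finite K" unfolding K_def by simp
  have S: "finite S" unfolding S_def by simp
  have q0: "q k u \<ge> 0" for k u unfolding q_def by (simp add: prod_nonneg PUW_nonneg)
  have qs: "(\<Sum>u\<in>S. q k u) = 1" for k
    unfolding q_def S_def by (simp add: sum_seqs_prod[where f="\<lambda>t u. PUW (fst k ! t) u"] PUW_sum)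
  have tt0: "tt vs k u \<ge> 0" for vs k u unfolding tt_def
    by (intro mult_nonneg_nonneg prod_nonneg) (simp_all add: PW_nonneg PV_nonneg)
  have cb: "codebooks n M = PiE K (\<lambda>_. S)" unfolding codebooks_def K_def S_def by simp
  have cp: "codebook_prob PUW n M c = (\<Prod>k\<in>K. q k (c k))" for c
    unfolding codebook_prob_def K_def q_def by (rule prod.cong[OF refl]) (simp add: case_prod_unfold)
  have io: "induced_out PW PV n M c vs = (\<Sum>k\<in>K. tt vs k (c k))" for c vs
    unfolding induced_out_def K_def tt_def sum_times_split
    by (simp add: sum_distrib_left)
  have Qdef: "Qf vs = (\<Sum>k\<in>K. \<Sum>u\<in>S. q k u * tt vs k u)" for vs
  proof -
    have "(\<Sum>k\<in>K. \<Sum>u\<in>S. q k u * tt vs k u)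
       = (\<Sum>ws\<in>seqs n. \<Sum>j\<in>{1..M}. 1 / real M * ((\<Prod>t<n. PW (ws ! t)) *
            (\<Sum>u\<in>S. \<Prod>t<n. PUW (ws ! t) (u ! t) * PV (ws ! t) (u ! t) (vs ! t))))"
      unfolding K_def q_def tt_def sum_times_split
      by (simp add: sum_distrib_left prod.distrib algebra_simps)
    also have "\<dots> = (\<Sum>ws\<in>seqs n. (\<Prod>t<n. PW (ws ! t)) *
            (\<Sum>u\<in>S. \<Prod>t<n. PUW (ws ! t) (u ! t) * PV (ws ! t) (u ! t) (vs ! t)))"
      using M1 by simp
    also have "\<dots> = (\<Sum>ws\<in>seqs n. \<Prod>t<n. PW (ws ! t) *
            (\<Sum>u\<in>UNIV. PUW (ws ! t) u * PV (ws ! t) u (vs ! t)))"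
      unfolding S_def
    proof (rule sum.cong[OF refl])
      fix ws :: "'w list"
      have "(\<Sum>u\<in>seqs n. \<Prod>t<n. PUW (ws ! t) (u ! t) * PV (ws ! t) (u ! t) (vs ! t))
         = (\<Prod>t<n. \<Sum>u\<in>UNIV. PUW (ws ! t) u * PV (ws ! t) u (vs ! t))"
        by (rule sum_seqs_prod)
      then show "(\<Prod>t<n. PW (ws ! t)) * (\<Sum>u\<in>seqs n. \<Prod>t<n. PUW (ws ! t) (u ! t) * PV (ws ! t) (u ! t) (vs ! t))
         = (\<Prod>t<n. PW (ws ! t) * (\<Sum>u\<in>UNIV. PUW (ws ! t) u * PV (ws ! t) u (vs ! t)))"
        by (simp add: prod.distrib)
    qed
    also have "\<dots> = (\<Prod>t<n. \<Sum>w\<in>UNIV. PW w * (\<Sum>u\<in>UNIV. PUW w u * PV w u (vs ! t)))"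
      by (rule sum_seqs_prod)
    also have "\<dots> = Qf vs" unfolding Qf_def om_def out_marg_def
      by (simp add: sum_distrib_left mult.assoc)
    finally show ?thesis by simp
  qed
  have omsum: "(\<Sum>v\<in>UNIV. om v) = 1"
  proof -
    have "(\<Sum>v\<in>UNIV. om v) = (\<Sum>w\<in>UNIV. \<Sum>u\<in>UNIV. PW w * PUW w u * (\<Sum>v\<in>UNIV. PV w u v))"
      unfolding om_def out_marg_def by (simp add: sum_distrib_left sum.swap[of _ "UNIV::'v set"])
    also have "\<dots> = 1" by (simp add: PV_sum sum_distrib_left[symmetric] PUW_sum PW_sum)
    finally show ?thesis .
  qed
  have Qsum: "(\<Sum>vs\<in>seqs n. Qf vs) = 1"
    unfolding Qf_def by (simp add: sum_seqs_prod[where f="\<lambda>t. om"] omsum)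
  define Bnd where "Bnd = (\<Sum>vs\<in>seqs n. \<Sum>k\<in>K. \<Sum>u\<in>S. q k u * tt vs k u * (tt vs k u / (\<tau> * Qf vs)) powr s)"
  have "expected_tv PW PUW PV R n
      = (\<Sum>c\<in>PiE K (\<lambda>_. S). (\<Prod>k\<in>K. q k (c k)) * (1/2 * (\<Sum>vs\<in>seqs n. \<bar>(\<Sum>k\<in>K. tt vs k (c k)) - Qf vs\<bar>)))"
    unfolding expected_tv_def Let_def M_def[symmetric] cb cp io tv_dist_def Qf_def om_def by simp
  also have "\<dots> = 1/2 * (\<Sum>vs\<in>seqs n. \<Sum>c\<in>PiE K (\<lambda>_. S). (\<Prod>k\<in>K. q k (c k)) * \<bar>(\<Sum>k\<in>K. tt vs k (c k)) - Qf vs\<bar>)"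
    by (simp add: sum_distrib_left sum.swap[of _ "PiE K (\<lambda>_. S)"] algebra_simps)
  also have "\<dots> \<le> 1/2 * (\<Sum>vs\<in>seqs n. sqrt \<tau> * Qf vs + 2 * (\<Sum>k\<in>K. \<Sum>u\<in>S. q k u * tt vs k u * (tt vs k u / (\<tau> * Qf vs)) powr s))"
    by (intro mult_left_mono sum_mono soft_cover_v[OF K S q0 qs tt0 tau s Qdef]) simp
  also have "\<dots> = 1/2 * sqrt \<tau> + Bnd"
    unfolding Bnd_def by (simp add: sum.distrib sum_distrib_left[symmetric] Qsum)
  finally have step: "expected_tv PW PUW PV R n \<le> 1/2 * sqrt \<tau> + Bnd" .
  define F where "F w u v = PW w * PUW w u * PV w u v * (PW w * PV w u v / om v) powr s"
    for w u v
  have pw: "q k u * tt vs k u * (tt vs k u / (\<tau> * Qf vs)) powr s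
       = (\<tau> * real M) powr (-s) * (1 / real M) * (\<Prod>t<n. F (fst k ! t) (u ! t) (vs ! t))" for k u vs
  proof -
    define a where "a = (\<Prod>t<n. PW (fst k ! t))"
    define b where "b = (\<Prod>t<n. PV (fst k ! t) (u ! t) (vs ! t))"
    define Q where "Q = Qf vs"
    have ttq: "tt vs k u = a * b / real M" unfolding tt_def a_def b_def by simp
    have PF: "(\<Prod>t<n. F (fst k ! t) (u ! t) (vs ! t)) = a * q k u * b * (a * b / Q) powr s"
    proof -
      have e1: "(\<Prod>t<n. (PW (fst k ! t) * PV (fst k ! t) (u ! t) (vs ! t) / om (vs ! t)) powr s)
          = (\<Prod>t<n. PW (fst k ! t) * PV (fst k ! t) (u ! t) (vs ! t) / om (vs ! t)) powr s"
        by (rule prod_powr_distrib[symmetric])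
      have e2: "(\<Prod>t<n. PW (fst k ! t) * PV (fst k ! t) (u ! t) (vs ! t) / om (vs ! t)) = a * b / Q"
        unfolding a_def b_def Q_def Qf_def by (simp add: prod_dividef prod.distrib)
      show ?thesis unfolding F_def prod.distrib e1 e2 unfolding a_def b_def q_def by simp
    qed
    have "q k u * tt vs k u * (tt vs k u / (\<tau> * Qf vs)) powr s
        = q k u * (a * b / real M) * ((a * b / Q) / (\<tau> * real M)) powr s"
      unfolding ttq Q_def by (simp add: field_simps)
    also have "\<dots> = q k u * (a * b / real M) * ((a * b / Q) powr s / (\<tau> * real M) powr s)"
      by (simp add: powr_divide powr_mult)
    also have "\<dots> = (\<tau> * real M) powr (-s) * (1 / real M) * (a * q k u * b * (a * b / Q) powr s)"
      by (simp add: powr_minus divide_inverse)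
    finally show ?thesis unfolding PF .
  qed
  have "Bnd = (\<Sum>vs\<in>seqs n. \<Sum>ws\<in>seqs n. \<Sum>j\<in>{1..M}. \<Sum>u\<in>S.
         (\<tau> * real M) powr (-s) * (1 / real M) * (\<Prod>t<n. F (ws ! t) (u ! t) (vs ! t)))"
    unfolding Bnd_def pw K_def sum_times_split by simp
  also have "\<dots> = (\<tau> * real M) powr (-s) * (\<Sum>vs\<in>seqs n. \<Sum>ws\<in>seqs n. \<Sum>u\<in>seqs n.
          (\<Prod>t<n. F (ws ! t) (u ! t) (vs ! t)))"
    using M1 unfolding S_def by (simp add: sum_distrib_left[symmetric] sum_divide_distrib[symmetric])
  also have "(\<Sum>vs\<in>seqs n. \<Sum>ws\<in>seqs n. \<Sum>u\<in>seqs n. (\<Prod>t<n. F (ws ! t) (u ! t) (vs ! t)))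
      = (\<Sum>v\<in>UNIV. \<Sum>w\<in>UNIV. \<Sum>u\<in>UNIV. F w u v) ^ n"
  proof -
    have "(\<Sum>vs\<in>seqs n. \<Sum>ws\<in>seqs n. \<Sum>u\<in>seqs n. (\<Prod>t<n. F (ws ! t) (u ! t) (vs ! t)))
       = (\<Sum>vs\<in>seqs n. \<Sum>ws\<in>seqs n. \<Prod>t<n. \<Sum>u\<in>UNIV. F (ws ! t) u (vs ! t))"
      by (intro sum.cong refl sum_seqs_prod)
    also have "\<dots> = (\<Sum>vs\<in>seqs n. \<Prod>t<n. \<Sum>w\<in>UNIV. \<Sum>u\<in>UNIV. F w u (vs ! t))"
      by (intro sum.cong refl sum_seqs_prod)
    also have "\<dots> = (\<Prod>t<n. \<Sum>v\<in>UNIV. \<Sum>w\<in>UNIV. \<Sum>u\<in>UNIV. F w u v)"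
      by (rule sum_seqs_prod)
    finally show ?thesis by simp
  qed
  also have "(\<Sum>v\<in>UNIV. \<Sum>w\<in>UNIV. \<Sum>u\<in>UNIV. F w u v) = gfun PW PUW PV s"
  proof -
    have "(\<Sum>v\<in>UNIV. \<Sum>w\<in>UNIV. \<Sum>u\<in>UNIV. F w u v) = (\<Sum>w\<in>UNIV. \<Sum>v\<in>UNIV. \<Sum>u\<in>UNIV. F w u v)"
      by (rule sum.swap)
    also have "\<dots> = (\<Sum>w\<in>UNIV. \<Sum>u\<in>UNIV. \<Sum>v\<in>UNIV. F w u v)"
      by (intro sum.cong refl sum.swap)
    finally show ?thesis unfolding gfun_def F_def om_def .
  qed
  finally have "Bnd = (\<tau> * real M) powr (-s) * (gfun PW PUW PV s)^n" .
  then show ?thesis using step unfolding M_def by simp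
qed




lemma exists_s:
  fixes p l :: "'i \<Rightarrow> real"
  assumes I: "finite I" and ps: "(\<Sum>i\<in>I. p i) = 1" and e: "\<epsilon> > 0"
  shows "\<exists>s>0. (\<Sum>i\<in>I. p i * exp (s * l i)) \<le> exp (s * ((\<Sum>i\<in>I. p i * l i) + \<epsilon>))"
proof -
  define h where "h x = (\<Sum>i\<in>I. p i * exp (x * l i))" for x :: real
  define D where "D = (\<Sum>i\<in>I. p i * l i)"
  have h0: "h 0 = 1" unfolding h_def using ps by simp
  have "(h has_field_derivative D) (at 0)"
    unfolding h_def D_def
    by (auto intro!: derivative_eq_intros simp: mult.commute)
  then have "((\<lambda>y. (h y - h 0) / (y - 0)) \<longlongrightarrow> D) (at 0)"
    by (simp add: has_field_derivative_iff)
  then have "eventually (\<lambda>y. (h y - h 0) / (y - 0) < D + \<epsilon>) (at 0)"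
    using e by (intro order_tendstoD(2)) auto
  then obtain d where d: "d > 0" and dP: "\<And>y. y \<noteq> 0 \<Longrightarrow> dist y 0 < d \<Longrightarrow> (h y - h 0) / (y - 0) < D + \<epsilon>"
    unfolding eventually_at by auto
  define s where "s = d / 2"
  have s: "s > 0" "s \<noteq> 0" "dist s 0 < d" using d by (auto simp: s_def dist_real_def)
  have "(h s - 1) / s < D + \<epsilon>" using dP[OF s(2,3)] h0 by simp
  then have "h s - 1 < s * (D + \<epsilon>)" using s by (simp add: field_simps)
  then have "h s \<le> 1 + s * (D + \<epsilon>)" by simp
  also have "\<dots> \<le> exp (s * (D + \<epsilon>))" by (rule exp_ge_add_one_self)
  finally show ?thesis using s unfolding h_def D_def by blast
qed




lemma sum_UNIV3: "(\<Sum>i\<in>UNIV. f i) = (\<Sum>w\<in>UNIV. \<Sum>u\<in>UNIV. \<Sum>v\<in>UNIV. f (w,u,v))"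
  for f :: "('a::finite \<times> 'b::finite \<times> 'c::finite) \<Rightarrow> real"
proof -
  have "(\<Sum>i\<in>UNIV \<times> (UNIV \<times> UNIV). f i) = (\<Sum>w\<in>UNIV. \<Sum>u\<in>UNIV. \<Sum>v\<in>UNIV. f (w,u,v))"
    unfolding sum_times_split ..
  then show ?thesis by simp
qed

lemma g_bound:
  fixes PW :: "'w::finite \<Rightarrow> real"
    and PUW :: "'w \<Rightarrow> 'u::finite \<Rightarrow> real"
    and PV :: "'w \<Rightarrow> 'u \<Rightarrow> 'v::finite \<Rightarrow> real"
  assumes PW_nonneg: "\<And>w. PW w \<ge> 0"
    and PW_sum: "(\<Sum>w\<in>UNIV. PW w) = 1"
    and PUW_nonneg: "\<And>w u. PUW w u \<ge> 0"
    and PUW_sum: "\<And>w. (\<Sum>u\<in>UNIV. PUW w u) = 1"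
    and PV_nonneg: "\<And>w u v. PV w u v \<ge> 0"
    and PV_sum: "\<And>w u. (\<Sum>v\<in>UNIV. PV w u v) = 1"
    and e: "\<epsilon> > 0"
  shows "\<exists>s>0. gfun PW PUW PV s \<le> 2 powr (s * (mutual_info_WU_V PW PUW PV - entropy_bits PW + \<epsilon>))"
proof -
  define om where "om = out_marg PW PUW PV"
  define P where "P w u v = PW w * PUW w u * PV w u v" for w u v
  define p where "p i = (case i of (w,u,v) \<Rightarrow> P w u v)" for i :: "'w \<times> 'u \<times> 'v"
  define l where "l i = (case i of (w,u,v) \<Rightarrow> if P w u v = 0 then 0 else ln (PW w * PV w u v / om v))"
    for i :: "'w \<times> 'u \<times> 'v"
  have ps: "(\<Sum>i\<in>UNIV. p i) = 1"
    unfolding sum_UNIV3 p_def P_def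
    by (simp add: sum_distrib_left[symmetric] mult.assoc PV_sum PUW_sum PW_sum)
  obtain s where s: "s > 0" and sb: "(\<Sum>i\<in>UNIV. p i * exp (s * l i)) \<le> exp (s * ((\<Sum>i\<in>UNIV. p i * l i) + \<epsilon> * ln 2))"
    using exists_s[OF finite_UNIV ps, of "\<epsilon> * ln 2" l] e by auto
  have P0: "P w u v \<ge> 0" for w u v unfolding P_def by (simp add: PW_nonneg PUW_nonneg PV_nonneg)
  have Ppos: "PW w > 0" "PUW w u > 0" "PV w u v > 0" "om v > 0" if "P w u v \<noteq> 0" for w u v
  proof -
    show "PW w > 0" "PUW w u > 0" "PV w u v > 0" using that PW_nonneg[of w] PUW_nonneg[of w u] PV_nonneg[of w u v]
      unfolding P_def by (auto simp: less_le)
    have "P w u v \<le> (\<Sum>u\<in>UNIV. P w u v)" by (rule member_le_sum) (auto simp: P0)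
    also have "\<dots> \<le> (\<Sum>w\<in>UNIV. \<Sum>u\<in>UNIV. P w u v)"
      by (rule member_le_sum[where f="\<lambda>w. \<Sum>u\<in>UNIV. P w u v"]) (auto simp: P0 sum_nonneg)
    also have "\<dots> = om v" unfolding om_def out_marg_def P_def ..
    finally show "om v > 0" using that P0[of w u v] by linarith
  qed
  have gs: "gfun PW PUW PV s = (\<Sum>i\<in>UNIV. p i * exp (s * l i))"
    unfolding sum_UNIV3 gfun_def
  proof (intro sum.cong refl)
    fix w u v
    show "PW w * PUW w u * PV w u v * (PW w * PV w u v / out_marg PW PUW PV v) powr s
        = p (w, u, v) * exp (s * l (w, u, v))"
    proof (cases "P w u v = 0")
      case True
      then show ?thesis unfolding p_def by (simp add: P_def)
    next
      case False
      note pos = Ppos[OF False]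
      then show ?thesis unfolding p_def l_def using False
        by (simp add: P_def powr_def om_def mult.commute)
    qed
  qed
  have lsum: "(\<Sum>i\<in>UNIV. p i * l i) = ln 2 * (mutual_info_WU_V PW PUW PV - entropy_bits PW)"
  proof -
    define E where "E w = (if PW w = 0 then 0 else PW w * ln (PW w))" for w
    have trm: "p (w,u,v) * l (w,u,v) = ln 2 * xlog2 (P w u v) (P w u v / (PW w * PUW w u * om v))
         + E w * PUW w u * PV w u v" for w u v
    proof (cases "P w u v = 0")
      case True
      then have "PW w = 0 \<or> PUW w u * PV w u v = 0" unfolding P_def by auto
      then show ?thesis using True unfolding p_def l_def E_def xlog2_def by auto
    next
      case False
      note pos = Ppos[OF False]
      have eq: "P w u v / (PW w * PUW w u * om v) = PV w u v / om v"
        using pos unfolding P_def by (simp add: field_simps)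
      have "PW w * PV w u v / om v = PW w * (PV w u v / om v)" by simp
      then have L: "ln (PW w * PV w u v / om v) = ln (PW w) + ln (PV w u v / om v)"
        using pos ln_mult[of "PW w" "PV w u v / om v"] by simp
      show ?thesis using False pos unfolding p_def l_def E_def xlog2_def eq
        by (simp add: L log_def P_def field_simps)
    qed
    have "(\<Sum>i\<in>UNIV. p i * l i) = ln 2 * mutual_info_WU_V PW PUW PV
         + (\<Sum>w\<in>UNIV. \<Sum>u\<in>UNIV. \<Sum>v\<in>UNIV. E w * PUW w u * PV w u v)"
      unfolding sum_UNIV3 trm mutual_info_WU_V_def om_def P_def
      by (simp add: sum.distrib sum_distrib_left)
    also have "(\<Sum>w\<in>UNIV. \<Sum>u\<in>UNIV. \<Sum>v\<in>UNIV. E w * PUW w u * PV w u v) = (\<Sum>w\<in>UNIV. E w)"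
      by (simp add: sum_distrib_left[symmetric] mult.assoc PV_sum PUW_sum)
    also have "(\<Sum>w\<in>UNIV. E w) = - ln 2 * entropy_bits PW"
      unfolding entropy_bits_def E_def xlog2_def
      by (simp add: sum_distrib_left sum_negf[symmetric], intro sum.cong refl) (simp add: log_def)
    finally show ?thesis by (simp add: algebra_simps)
  qed
  have "gfun PW PUW PV s \<le> exp (s * (ln 2 * (mutual_info_WU_V PW PUW PV - entropy_bits PW) + \<epsilon> * ln 2))"
    using sb unfolding gs lsum .
  also have "\<dots> = 2 powr (s * (mutual_info_WU_V PW PUW PV - entropy_bits PW + \<epsilon>))"
    by (simp add: powr_def algebra_simps)
  finally show ?thesis using s by blast
qed




lemma expected_tv_nonneg:
  assumes "\<And>w u. PUW w u \<ge> (0::real)"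
  shows "expected_tv PW PUW PV R n \<ge> 0"
  unfolding expected_tv_def Let_def codebook_prob_def tv_dist_def
  by (intro sum_nonneg mult_nonneg_nonneg prod_nonneg) (auto simp: assms case_prod_unfold prod_nonneg)

lemma gfun_nonneg:
  assumes "\<And>w. PW w \<ge> 0" "\<And>w u. PUW w u \<ge> 0" "\<And>w u v. PV w u v \<ge> 0"
  shows "gfun PW PUW PV s \<ge> 0"
  unfolding gfun_def by (intro sum_nonneg mult_nonneg_nonneg) (simp_all add: assms)

theorem mainTheorem13:
  fixes PW :: "'w::finite \<Rightarrow> real"
    and PUW :: "'w \<Rightarrow> 'u::finite \<Rightarrow> real"
    and PV :: "'w \<Rightarrow> 'u \<Rightarrow> 'v::finite \<Rightarrow> real"
    and R :: real
  assumes PW_nonneg: "\<And>w. PW w \<ge> 0"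
    and PW_sum: "(\<Sum>w\<in>UNIV. PW w) = 1"
    and PUW_nonneg: "\<And>w u. PUW w u \<ge> 0"
    and PUW_sum: "\<And>w. (\<Sum>u\<in>UNIV. PUW w u) = 1"
    and PV_nonneg: "\<And>w u v. PV w u v \<ge> 0"
    and PV_sum: "\<And>w u. (\<Sum>v\<in>UNIV. PV w u v) = 1"
    and rate: "R > mutual_info_WU_V PW PUW PV - entropy_bits PW"
  shows "(expected_tv PW PUW PV R \<longlongrightarrow> 0) sequentially \<and>
         (\<exists>\<gamma>>0. \<exists>K. \<forall>n. expected_tv PW PUW PV R n \<le> K * 2 powr (- \<gamma> * real n))"
proof -
  define IH where "IH = mutual_info_WU_V PW PUW PV - entropy_bits PW"
  define \<epsilon> where "\<epsilon> = (R - IH) / 3"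
  have e: "\<epsilon> > 0" using rate unfolding \<epsilon>_def IH_def by simp
  obtain s where s: "s > 0" and gs: "gfun PW PUW PV s \<le> 2 powr (s * (IH + \<epsilon>))"
    using g_bound[where PW=PW and PUW=PUW and PV=PV, OF PW_nonneg PW_sum PUW_nonneg PUW_sum PV_nonneg PV_sum e] unfolding IH_def by blast
  define \<gamma> where "\<gamma> = min (\<epsilon> / 2) (s * \<epsilon>)"
  have g: "\<gamma> > 0" using e s unfolding \<gamma>_def by simp
  have gle1: "\<gamma> \<le> \<epsilon> / 2" and gle2: "\<gamma> \<le> s * \<epsilon>" unfolding \<gamma>_def by simp_all
  have bound: "expected_tv PW PUW PV R n \<le> 2 * 2 powr (- \<gamma> * real n)" for n
  proof -
    define \<tau> where "\<tau> = 2 powr (- real n * \<epsilon>)"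
    define M where "M = real (num_cw R n)"
    have tau: "\<tau> > 0" unfolding \<tau>_def by simp
    have M: "M \<ge> 2 powr (real n * R)" unfolding M_def by (rule num_cw_ge)
    have mb: "expected_tv PW PUW PV R n \<le> 1/2 * sqrt \<tau> + (\<tau> * M) powr (-s) * (gfun PW PUW PV s)^n"
      unfolding M_def by (rule main_bound[where PW=PW and PUW=PUW and PV=PV, OF PW_nonneg PW_sum PUW_nonneg PUW_sum PV_nonneg PV_sum tau s])
    have sq: "sqrt \<tau> = 2 powr (- real n * (\<epsilon> / 2))"
      unfolding \<tau>_def by (simp add: powr_half_sqrt[symmetric] powr_powr)
    have t1: "(\<tau> * M) powr (-s) \<le> (\<tau> * 2 powr (real n * R)) powr (-s)"
      by (rule powr_mono2') (use s tau M in \<open>auto\<close>)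
    have t1': "(\<tau> * 2 powr (real n * R)) powr (-s) = 2 powr (- s * real n * (R - \<epsilon>))"
      unfolding \<tau>_def by (simp add: powr_add[symmetric] powr_powr algebra_simps)
    have t2: "(gfun PW PUW PV s)^n \<le> (2 powr (s * (IH + \<epsilon>)))^n"
      by (rule power_mono[OF gs gfun_nonneg[where PW=PW and PUW=PUW and PV=PV, OF PW_nonneg PUW_nonneg PV_nonneg]])
    have t2': "(2 powr (s * (IH + \<epsilon>)))^n = 2 powr (s * real n * (IH + \<epsilon>))"
      by (simp add: powr_realpow[symmetric] powr_powr algebra_simps)
    have "(\<tau> * M) powr (-s) * (gfun PW PUW PV s)^n
        \<le> 2 powr (- s * real n * (R - \<epsilon>)) * 2 powr (s * real n * (IH + \<epsilon>))"
      using t1 t1' t2 t2' by (metis mult_mono powr_ge_zero zero_le_power gfun_nonneg[where PW=PW and PUW=PUW and PV=PV, OF PW_nonneg PUW_nonneg PV_nonneg])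
    also have "\<dots> = 2 powr (- real n * (s * \<epsilon>))"
    proof -
      have R3: "R = IH + 3 * \<epsilon>" unfolding \<epsilon>_def by (simp add: field_simps)
      have "- s * real n * (R - \<epsilon>) + s * real n * (IH + \<epsilon>) = - real n * (s * \<epsilon>)"
        by (simp add: R3 algebra_simps)
      then show ?thesis by (simp add: powr_add[symmetric])
    qed
    also have "\<dots> \<le> 2 powr (- \<gamma> * real n)"
      by (rule powr_mono) (use mult_right_mono[OF gle2, of "real n"] in \<open>simp_all add: mult.commute\<close>)
    finally have b2: "(\<tau> * M) powr (-s) * (gfun PW PUW PV s)^n \<le> 2 powr (- \<gamma> * real n)" .
    have b1: "sqrt \<tau> \<le> 2 powr (- \<gamma> * real n)"
      unfolding sq by (rule powr_mono) (use mult_right_mono[OF gle1, of "real n"] in \<open>simp_all add: mult.commute\<close>)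
    show ?thesis using mb b1 b2 powr_ge_zero[of 2 "- \<gamma> * real n"] by linarith
  qed
  have lim: "(\<lambda>n. 2 * 2 powr (- \<gamma> * real n)) \<longlonglongrightarrow> 0"
  proof -
    have eq: "2 powr (- \<gamma> * real n) = (2 powr (- \<gamma>)) ^ n" for n
      by (simp add: powr_realpow[symmetric] powr_powr)
    have "(2::real) powr (- \<gamma>) < 1" using powr_less_mono[of "- \<gamma>" 0 "2::real"] g by simp
    then have "(\<lambda>n. (2 powr (- \<gamma>)) ^ n) \<longlonglongrightarrow> 0"
      by (intro LIMSEQ_power_zero) simp
    then show ?thesis unfolding eq using tendsto_mult_right_zero by blast
  qed
  have ev1: "eventually (\<lambda>n. 0 \<le> expected_tv PW PUW PV R n) sequentially"
    by (rule always_eventually) (use expected_tv_nonneg[where PUW=PUW, OF PUW_nonneg] in blast)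
  have ev2: "eventually (\<lambda>n. expected_tv PW PUW PV R n \<le> 2 * 2 powr (- \<gamma> * real n)) sequentially"
    by (rule always_eventually) (use bound in blast)
  have "(expected_tv PW PUW PV R \<longlongrightarrow> 0) sequentially"
    by (rule tendsto_sandwich[OF ev1 ev2 tendsto_const lim])
  then show ?thesis using g bound by blast
qed


end
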